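(* Let $M$ be a principally Goldie*-lifting right $R$-module with $\mathrm{Rad}(M)\ll M$. Then $M/\mathrm{Rad}(M)$ is principally semisimple.
   Context: $R$ is an associative ring with identity; modules are unital right $R$-modules; $\mathrm{Rad}(M)$ is the Jacobson radical of $M$. $K\ll M$ means $K$ is small in $M$. A module is principally semisimple if every cyclic submodule is a direct summand. For submodules $X,Y$ of $M$, $X\,\beta^*\,Y$ means $(X+Y)/X\ll M/X$ and $(X+Y)/Y\ll M/Y$. $M$ is principally Goldie*-lifting if for every cyclic submodule $X$ of $M$ there is a direct summand $D$ of $M$ with $X\,\beta^*\,D$. *)

theory Defs
  imports "HOL-Algebra.Algebra"
begin

text \<open>A right R-module is given by an abelian group M
  (the additive structure of a ring record; its multiplicative fields are ignored)
  together with a right scalar action act :: element => scalar => element.\<close>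

definition right_module :: "('r,'c) ring_scheme \<Rightarrow> ('a,'m) ring_scheme \<Rightarrow> ('a \<Rightarrow> 'r \<Rightarrow> 'a) \<Rightarrow> bool" where
  "right_module R M act \<longleftrightarrow> ring R \<and> abelian_group M \<and>
     (\<forall>x\<in>carrier M. \<forall>r\<in>carrier R. act x r \<in> carrier M) \<and>
     (\<forall>x\<in>carrier M. \<forall>y\<in>carrier M. \<forall>r\<in>carrier R. act (x \<oplus>\<^bsub>M\<^esub> y) r = act x r \<oplus>\<^bsub>M\<^esub> act y r) \<and>
     (\<forall>x\<in>carrier M. \<forall>r\<in>carrier R. \<forall>s\<in>carrier R. act x (r \<oplus>\<^bsub>R\<^esub> s) = act x r \<oplus>\<^bsub>M\<^esub> act x s) \<and>
     (\<forall>x\<in>carrier M. \<forall>r\<in>carrier R. \<forall>s\<in>carrier R. act x (r \<otimes>\<^bsub>R\<^esub> s) = act (act x r) s) \<and>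
     (\<forall>x\<in>carrier M. act x \<one>\<^bsub>R\<^esub> = x)"

definition submod :: "('r,'c) ring_scheme \<Rightarrow> ('a,'m) ring_scheme \<Rightarrow> ('a \<Rightarrow> 'r \<Rightarrow> 'a) \<Rightarrow> 'a set \<Rightarrow> bool" where
  "submod R M act U \<longleftrightarrow> U \<subseteq> carrier M \<and> \<zero>\<^bsub>M\<^esub> \<in> U \<and>
     (\<forall>x\<in>U. \<forall>y\<in>U. x \<oplus>\<^bsub>M\<^esub> y \<in> U) \<and> (\<forall>x\<in>U. a_inv M x \<in> U) \<and>
     (\<forall>x\<in>U. \<forall>r\<in>carrier R. act x r \<in> U)"

definition msum :: "('a,'m) ring_scheme \<Rightarrow> 'a set \<Rightarrow> 'a set \<Rightarrow> 'a set" where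
  "msum M U V = {x \<oplus>\<^bsub>M\<^esub> y | x y. x \<in> U \<and> y \<in> V}"

definition small_sub :: "('r,'c) ring_scheme \<Rightarrow> ('a,'m) ring_scheme \<Rightarrow> ('a \<Rightarrow> 'r \<Rightarrow> 'a) \<Rightarrow> 'a set \<Rightarrow> bool" where
  "small_sub R M act K \<longleftrightarrow> submod R M act K \<and>
     (\<forall>L. submod R M act L \<and> msum M K L = carrier M \<longrightarrow> L = carrier M)"

definition maximal_sub :: "('r,'c) ring_scheme \<Rightarrow> ('a,'m) ring_scheme \<Rightarrow> ('a \<Rightarrow> 'r \<Rightarrow> 'a) \<Rightarrow> 'a set \<Rightarrow> bool" where
  "maximal_sub R M act K \<longleftrightarrow> submod R M act K \<and> K \<noteq> carrier M \<and>
     (\<forall>L. submod R M act L \<and> K \<subseteq> L \<longrightarrow> L = K \<or> L = carrier M)"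

text \<open>Jacobson radical: intersection of all maximal submodules (= M if there are none).\<close>
definition Rad :: "('r,'c) ring_scheme \<Rightarrow> ('a,'m) ring_scheme \<Rightarrow> ('a \<Rightarrow> 'r \<Rightarrow> 'a) \<Rightarrow> 'a set" where
  "Rad R M act = {x \<in> carrier M. \<forall>K. maximal_sub R M act K \<longrightarrow> x \<in> K}"

definition direct_summand :: "('r,'c) ring_scheme \<Rightarrow> ('a,'m) ring_scheme \<Rightarrow> ('a \<Rightarrow> 'r \<Rightarrow> 'a) \<Rightarrow> 'a set \<Rightarrow> bool" where
  "direct_summand R M act D \<longleftrightarrow> submod R M act D \<and>
     (\<exists>D'. submod R M act D' \<and> msum M D D' = carrier M \<and> D \<inter> D' = {\<zero>\<^bsub>M\<^esub>})"

definition cyclic_sub :: "('r,'c) ring_scheme \<Rightarrow> ('a \<Rightarrow> 'r \<Rightarrow> 'a) \<Rightarrow> 'a \<Rightarrow> 'a set" where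
  "cyclic_sub R act x = {act x r | r. r \<in> carrier R}"

definition principally_semisimple :: "('r,'c) ring_scheme \<Rightarrow> ('a,'m) ring_scheme \<Rightarrow> ('a \<Rightarrow> 'r \<Rightarrow> 'a) \<Rightarrow> bool" where
  "principally_semisimple R M act \<longleftrightarrow>
     (\<forall>x\<in>carrier M. direct_summand R M act (cyclic_sub R act x))"

text \<open>Quotient module M/U: cosets U + x, with induced addition and action
  (the multiplicative record fields are junk and irrelevant).\<close>
definition quot_mod :: "('a,'m) ring_scheme \<Rightarrow> 'a set \<Rightarrow> 'a set ring" where
  "quot_mod M U = \<lparr>carrier = a_rcosets\<^bsub>M\<^esub> U, monoid.mult = (\<lambda>A B. A), monoid.one = U,
                   ring.zero = U, ring.add = set_add M\<rparr>"

definition quot_act :: "('a,'m) ring_scheme \<Rightarrow> ('a \<Rightarrow> 'r \<Rightarrow> 'a) \<Rightarrow> 'a set \<Rightarrow> 'a set \<Rightarrow> 'r \<Rightarrow> 'a set" where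
  "quot_act M act U C r = U +>\<^bsub>M\<^esub> act (SOME x. x \<in> C) r"

definition proj_image :: "('a,'m) ring_scheme \<Rightarrow> 'a set \<Rightarrow> 'a set \<Rightarrow> 'a set set" where
  "proj_image M U S = (\<lambda>s. U +>\<^bsub>M\<^esub> s) ` S"

definition beta_star :: "('r,'c) ring_scheme \<Rightarrow> ('a,'m) ring_scheme \<Rightarrow> ('a \<Rightarrow> 'r \<Rightarrow> 'a) \<Rightarrow> 'a set \<Rightarrow> 'a set \<Rightarrow> bool" where
  "beta_star R M act U V \<longleftrightarrow>
     small_sub R (quot_mod M U) (quot_act M act U) (proj_image M U (msum M U V)) \<and>
     small_sub R (quot_mod M V) (quot_act M act V) (proj_image M V (msum M U V))"

definition principally_Goldie_star_lifting :: "('r,'c) ring_scheme \<Rightarrow> ('a,'m) ring_scheme \<Rightarrow> ('a \<Rightarrow> 'r \<Rightarrow> 'a) \<Rightarrow> bool" where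
  "principally_Goldie_star_lifting R M act \<longleftrightarrow>
     (\<forall>x\<in>carrier M. \<exists>D. direct_summand R M act D \<and> beta_star R M act (cyclic_sub R act x) D)"

end

theory Submission
  imports Defs
begin


locale rmod = abelian_group +
  fixes R :: "('r,'c) ring_scheme" and act :: "'a \<Rightarrow> 'r \<Rightarrow> 'a"
  assumes rm: "right_module R G act"
begin

lemma ringR: "ring R" using rm unfolding right_module_def by blast
lemma act_closed: "x \<in> carrier G \<Longrightarrow> r \<in> carrier R \<Longrightarrow> act x r \<in> carrier G"
  using rm unfolding right_module_def by blast
lemma act_add: "x \<in> carrier G \<Longrightarrow> y \<in> carrier G \<Longrightarrow> r \<in> carrier R \<Longrightarrow> act (x \<oplus> y) r = act x r \<oplus> act y r"
  using rm unfolding right_module_def by blast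
lemma act_radd: "x \<in> carrier G \<Longrightarrow> r \<in> carrier R \<Longrightarrow> s \<in> carrier R \<Longrightarrow> act x (r \<oplus>\<^bsub>R\<^esub> s) = act x r \<oplus> act x s"
  using rm unfolding right_module_def by blast
lemma act_mult: "x \<in> carrier G \<Longrightarrow> r \<in> carrier R \<Longrightarrow> s \<in> carrier R \<Longrightarrow> act x (r \<otimes>\<^bsub>R\<^esub> s) = act (act x r) s"
  using rm unfolding right_module_def by blast

lemma act_rzero: "x \<in> carrier G \<Longrightarrow> act x \<zero>\<^bsub>R\<^esub> = \<zero>"
proof -
  interpret R: ring R by (rule ringR)
  assume x: "x \<in> carrier G"
  have "act x \<zero>\<^bsub>R\<^esub> = act x \<zero>\<^bsub>R\<^esub> \<oplus> act x \<zero>\<^bsub>R\<^esub>"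
    using act_radd[OF x R.zero_closed R.zero_closed] by simp
  hence h: "act x \<zero>\<^bsub>R\<^esub> \<oplus> act x \<zero>\<^bsub>R\<^esub> = act x \<zero>\<^bsub>R\<^esub>" by simp
  have c: "act x \<zero>\<^bsub>R\<^esub> \<in> carrier G" using act_closed[OF x R.zero_closed] .
  have "act x \<zero>\<^bsub>R\<^esub> = \<ominus> act x \<zero>\<^bsub>R\<^esub> \<oplus> (act x \<zero>\<^bsub>R\<^esub> \<oplus> act x \<zero>\<^bsub>R\<^esub>)"
    using r_neg1 c by simp
  also have "\<dots> = \<ominus> act x \<zero>\<^bsub>R\<^esub> \<oplus> act x \<zero>\<^bsub>R\<^esub>" by (simp only: h)
  also have "\<dots> = \<zero>" using c by (rule l_neg)
  finally show ?thesis .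
qed

lemma act_rneg: "x \<in> carrier G \<Longrightarrow> r \<in> carrier R \<Longrightarrow> act x (\<ominus>\<^bsub>R\<^esub> r) = \<ominus> act x r"
proof -
  interpret R: ring R by (rule ringR)
  assume x: "x \<in> carrier G" and r: "r \<in> carrier R"
  have "act x (\<ominus>\<^bsub>R\<^esub> r) \<oplus> act x r = \<zero>"
    using act_radd[OF x R.a_inv_closed[OF r] r] act_rzero[OF x] r by (simp add: R.l_neg)
  thus ?thesis using act_closed x r R.a_inv_closed
    by (metis minus_equality)
qed

lemma submodD: assumes "submod R G act U"
  shows "U \<subseteq> carrier G" "\<zero> \<in> U" "\<And>x y. x \<in> U \<Longrightarrow> y \<in> U \<Longrightarrow> x \<oplus> y \<in> U"
    "\<And>x. x \<in> U \<Longrightarrow> \<ominus> x \<in> U" "\<And>x r. x \<in> U \<Longrightarrow> r \<in> carrier R \<Longrightarrow> act x r \<in> U"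
  using assms unfolding submod_def by auto

lemma submod_subgroup: assumes "submod R G act U" shows "subgroup U (add_monoid G)"
  using submodD[OF assms] by (intro add.subgroupI) auto

lemma submod_ab: assumes "submod R G act U" shows "abelian_subgroup U G"
  by (rule abelian_subgroupI3) (auto intro: additive_subgroup.intro submod_subgroup[OF assms] abelian_group_axioms)

lemma submod_carrier: "submod R G act (carrier G)"
  unfolding submod_def using act_closed by auto

lemma submod_Int: "submod R G act U \<Longrightarrow> submod R G act V \<Longrightarrow> submod R G act (U \<inter> V)"
  unfolding submod_def by auto

lemma submod_msum: assumes U: "submod R G act U" and V: "submod R G act V"
  shows "submod R G act (msum G U V)"
proof -
  note u = submodD[OF U] and v = submodD[OF V]
  show ?thesis unfolding submod_def msum_def
  proof (intro conjI ballI)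
    show "{x \<oplus> y |x y. x \<in> U \<and> y \<in> V} \<subseteq> carrier G" using u(1) v(1) by auto
    show "\<zero> \<in> {x \<oplus> y |x y. x \<in> U \<and> y \<in> V}" using u(2) v(2) by force
  next
    fix a b assume a: "a \<in> {x \<oplus> y |x y. x \<in> U \<and> y \<in> V}" and b: "b \<in> {x \<oplus> y |x y. x \<in> U \<and> y \<in> V}"
    then obtain x1 y1 x2 y2 where e: "a = x1 \<oplus> y1" "b = x2 \<oplus> y2" "x1 \<in> U" "y1 \<in> V" "x2 \<in> U" "y2 \<in> V" by blast
    hence c: "x1 \<in> carrier G" "y1 \<in> carrier G" "x2 \<in> carrier G" "y2 \<in> carrier G" using u(1) v(1) by auto
    have "a \<oplus> b = (x1 \<oplus> x2) \<oplus> (y1 \<oplus> y2)" using c e by (simp add: a_ac)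
    thus "a \<oplus> b \<in> {x \<oplus> y |x y. x \<in> U \<and> y \<in> V}" using e u(3) v(3) by blast
  next
    fix a assume "a \<in> {x \<oplus> y |x y. x \<in> U \<and> y \<in> V}"
    then obtain x1 y1 where e: "a = x1 \<oplus> y1" "x1 \<in> U" "y1 \<in> V" by blast
    hence c: "x1 \<in> carrier G" "y1 \<in> carrier G" using u(1) v(1) by auto
    have "\<ominus> a = \<ominus> x1 \<oplus> \<ominus> y1" using c e by (simp add: minus_add)
    thus "\<ominus> a \<in> {x \<oplus> y |x y. x \<in> U \<and> y \<in> V}" using e u(4) v(4) by blast
  next
    fix a r assume "a \<in> {x \<oplus> y |x y. x \<in> U \<and> y \<in> V}" and r: "r \<in> carrier R"
    then obtain x1 y1 where e: "a = x1 \<oplus> y1" "x1 \<in> U" "y1 \<in> V" by blast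
    hence c: "x1 \<in> carrier G" "y1 \<in> carrier G" using u(1) v(1) by auto
    have "act a r = act x1 r \<oplus> act y1 r" using c e r act_add by simp
    thus "act a r \<in> {x \<oplus> y |x y. x \<in> U \<and> y \<in> V}" using e u(5) v(5) r by blast
  qed
qed

lemma cyclic_submod: assumes x: "x \<in> carrier G" shows "submod R G act (cyclic_sub R act x)"
proof -
  interpret R: ring R by (rule ringR)
  show ?thesis unfolding submod_def cyclic_sub_def
  proof (intro conjI ballI)
    show "{act x r |r. r \<in> carrier R} \<subseteq> carrier G" using act_closed x by auto
    have "\<zero> = act x \<zero>\<^bsub>R\<^esub>" using act_rzero[OF x] by simp
    thus "\<zero> \<in> {act x r |r. r \<in> carrier R}" using R.zero_closed by blast
  next
    fix a b assume "a \<in> {act x r |r. r \<in> carrier R}" "b \<in> {act x r |r. r \<in> carrier R}"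
    then obtain r s where rs: "a = act x r" "b = act x s" "r \<in> carrier R" "s \<in> carrier R" by blast
    hence "a \<oplus> b = act x (r \<oplus>\<^bsub>R\<^esub> s)" using act_radd[OF x] by simp
    thus "a \<oplus> b \<in> {act x r |r. r \<in> carrier R}" using rs R.add.m_closed by blast
  next
    fix a assume "a \<in> {act x r |r. r \<in> carrier R}"
    then obtain r where rs: "a = act x r" "r \<in> carrier R" by blast
    hence "\<ominus> a = act x (\<ominus>\<^bsub>R\<^esub> r)" using act_rneg[OF x] by simp
    thus "\<ominus> a \<in> {act x r |r. r \<in> carrier R}" using rs R.add.inv_closed by blast
  next
    fix a s assume "a \<in> {act x r |r. r \<in> carrier R}" and s: "s \<in> carrier R"
    then obtain r where rs: "a = act x r" "r \<in> carrier R" by blast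
    hence "act a s = act x (r \<otimes>\<^bsub>R\<^esub> s)" using act_mult[OF x] s by simp
    thus "act a s \<in> {act x r |r. r \<in> carrier R}" using rs s R.m_closed by blast
  qed
qed

lemma Rad_submod: "submod R G act (Rad R G act)"
  unfolding Rad_def maximal_sub_def submod_def using act_closed by auto

end

locale rquot = rmod +
  fixes U assumes U: "submod R G act U"
begin

sublocale U: abelian_subgroup U G by (rule submod_ab[OF U])

lemma U_sub: "U \<subseteq> carrier G" using submodD[OF U] by blast
lemma U_subgroup: "subgroup U (add_monoid G)" by (rule submod_subgroup[OF U])

lemma q_carrier: "carrier (quot_mod G U) = a_rcosets U" by (simp add: quot_mod_def)
lemma q_zero: "\<zero>\<^bsub>quot_mod G U\<^esub> = U" by (simp add: quot_mod_def)
lemma q_add: "A \<oplus>\<^bsub>quot_mod G U\<^esub> B = set_add G A B" by (simp add: quot_mod_def)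

lemma rcos_add: "a \<in> carrier G \<Longrightarrow> b \<in> carrier G \<Longrightarrow> (U +> a) <+> (U +> b) = U +> (a \<oplus> b)"
  by (rule U.a_rcos_sum)

lemma rcos_mem: "a \<in> carrier G \<Longrightarrow> y \<in> U +> a \<longleftrightarrow> (\<exists>u\<in>U. y = u \<oplus> a)"
  by (auto simp: a_r_coset_def r_coset_def)

lemma rcos_shift: "u \<in> U \<Longrightarrow> b \<in> carrier G \<Longrightarrow> U +> (u \<oplus> b) = U +> b"
  using a_repr_independence[OF a_rcosI[of u U b] _ U_subgroup] U_sub by auto

lemma rcos_eq: "a \<in> carrier G \<Longrightarrow> b \<in> carrier G \<Longrightarrow> U +> a = U +> b \<longleftrightarrow> a \<oplus> \<ominus> b \<in> U"
proof
  assume a: "a \<in> carrier G" and b: "b \<in> carrier G" and e: "U +> a = U +> b"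
  have "U +> (a \<oplus> \<ominus> b) = U" using a_coset_add_inv2[OF e a b U_sub] .
  thus "a \<oplus> \<ominus> b \<in> U" using a_coset_join1[OF _ _ U_subgroup] a b by auto
next
  assume a: "a \<in> carrier G" and b: "b \<in> carrier G" and e: "a \<oplus> \<ominus> b \<in> U"
  have "U +> (a \<oplus> \<ominus> b) = U" using a_coset_join2[OF _ U_subgroup e] a b by auto
  thus "U +> a = U +> b" using a_coset_add_inv1[OF _ a b U_sub] by auto
qed

lemma rcos_eq_U: "a \<in> carrier G \<Longrightarrow> U +> a = U \<longleftrightarrow> a \<in> U"
  using a_coset_join1[OF _ _ U_subgroup] a_coset_join2[OF _ U_subgroup] by blast

lemma qact: assumes a: "a \<in> carrier G" and r: "r \<in> carrier R"
  shows "quot_act G act U (U +> a) r = U +> act a r"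
proof -
  have "\<exists>y. y \<in> U +> a" using U.a_rcos_self[OF a] by blast
  hence "(SOME y. y \<in> U +> a) \<in> U +> a" by (rule someI_ex)
  then obtain u where u: "u \<in> U" "(SOME y. y \<in> U +> a) = u \<oplus> a" using rcos_mem[OF a] by blast
  have uc: "u \<in> carrier G" using u U_sub by auto
  have "act (u \<oplus> a) r = act u r \<oplus> act a r" using act_add[OF uc a r] .
  moreover have "act u r \<in> U" using submodD(5)[OF U u(1) r] .
  ultimately show ?thesis unfolding quot_act_def u(2) using rcos_shift act_closed[OF a r] by simp
qed

lemma qinv: assumes a: "a \<in> carrier G" shows "a_inv (quot_mod G U) (U +> a) = U +> \<ominus> a"
proof -
  have eq: "a_inv (quot_mod G U) (U +> a) = m_inv (G A_Mod U) (U +> a)"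
    by (simp add: a_inv_def m_inv_def A_FactGroup_def' quot_mod_def)
  interpret Q: group "G A_Mod U" by (rule U.a_factorgroup_is_group)
  have "(U +> \<ominus> a) \<otimes>\<^bsub>G A_Mod U\<^esub> (U +> a) = \<one>\<^bsub>G A_Mod U\<^esub>"
    using rcos_add[of "\<ominus> a" a] a rcos_eq_U[of "\<ominus> a \<oplus> a"] U.a_subgroup subgroup.one_closed
    by (simp add: A_FactGroup_def' l_neg)
  moreover have "U +> a \<in> carrier (G A_Mod U)" "U +> \<ominus> a \<in> carrier (G A_Mod U)"
    using a U_sub by (auto simp: A_FactGroup_def' intro!: a_rcosetsI)
  ultimately show ?thesis unfolding eq by (rule Q.inv_equality)
qed


lemma rcosets_elem: "C \<in> a_rcosets U \<Longrightarrow> \<exists>a\<in>carrier G. C = U +> a"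
  by (auto simp: A_RCOSETS_def RCOSETS_def a_r_coset_def)

lemma rcos_in: "a \<in> carrier G \<Longrightarrow> U +> a \<in> a_rcosets U"
  using a_rcosetsI U_sub by blast

lemma proj_carrier: "proj_image G U (carrier G) = carrier (quot_mod G U)"
  unfolding proj_image_def q_carrier using rcosets_elem rcos_in by blast

lemma proj_sub: assumes S: "submod R G act S"
  shows "submod R (quot_mod G U) (quot_act G act U) (proj_image G U S)"
proof -
  note s = submodD[OF S]
  show ?thesis unfolding submod_def
  proof (intro conjI ballI)
    show "proj_image G U S \<subseteq> carrier (quot_mod G U)"
      unfolding proj_image_def q_carrier using s(1) rcos_in by blast
    have "U +> \<zero> = U" using rcos_eq_U U.a_subgroup subgroup.one_closed by fastforce
    thus "\<zero>\<^bsub>quot_mod G U\<^esub> \<in> proj_image G U S" unfolding q_zero proj_image_def using s(2)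
      by (metis image_eqI)
  next
    fix A B assume "A \<in> proj_image G U S" "B \<in> proj_image G U S"
    then obtain a b where ab: "a \<in> S" "b \<in> S" "A = U +> a" "B = U +> b" unfolding proj_image_def by blast
    have ac: "a \<in> carrier G" "b \<in> carrier G" using ab s(1) by auto
    have "A \<oplus>\<^bsub>quot_mod G U\<^esub> B = U +> (a \<oplus> b)" by (simp add: q_add ab rcos_add ac)
    thus "A \<oplus>\<^bsub>quot_mod G U\<^esub> B \<in> proj_image G U S" unfolding proj_image_def using s(3) ab by blast
  next
    fix A assume "A \<in> proj_image G U S"
    then obtain a where ab: "a \<in> S" "A = U +> a" unfolding proj_image_def by blast
    hence "a_inv (quot_mod G U) A = U +> \<ominus> a" using qinv s(1) by auto
    thus "a_inv (quot_mod G U) A \<in> proj_image G U S" unfolding proj_image_def using s(4) ab by blast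
  next
    fix A r assume "A \<in> proj_image G U S" "r \<in> carrier R"
    then obtain a where ab: "a \<in> S" "A = U +> a" unfolding proj_image_def by blast
    hence "quot_act G act U A r = U +> act a r" using qact s(1) \<open>r \<in> carrier R\<close> by auto
    thus "quot_act G act U A r \<in> proj_image G U S" unfolding proj_image_def using s(5) ab \<open>r \<in> carrier R\<close> by blast
  qed
qed

lemma proj_msum: assumes ST: "S \<subseteq> carrier G" "T \<subseteq> carrier G"
  shows "msum (quot_mod G U) (proj_image G U S) (proj_image G U T) = proj_image G U (msum G S T)"
proof -
  have "msum (quot_mod G U) (proj_image G U S) (proj_image G U T) = {set_add G (U +> a) (U +> b) | a b. a \<in> S \<and> b \<in> T}"
    unfolding msum_def proj_image_def q_add by blast
  also have "\<dots> = {U +> (a \<oplus> b) | a b. a \<in> S \<and> b \<in> T}"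
  proof -
    have "\<And>a b. a \<in> S \<Longrightarrow> b \<in> T \<Longrightarrow> set_add G (U +> a) (U +> b) = U +> (a \<oplus> b)"
      using rcos_add ST by blast
    thus ?thesis by (metis (no_types, opaque_lifting))
  qed
  also have "\<dots> = proj_image G U (msum G S T)" unfolding proj_image_def msum_def by blast
  finally show ?thesis .
qed

lemma proj_full: assumes S: "submod R G act S" and US: "U \<subseteq> S"
  and e: "proj_image G U S = carrier (quot_mod G U)"
  shows "S = carrier G"
proof
  show "S \<subseteq> carrier G" using submodD(1)[OF S] .
  show "carrier G \<subseteq> S"
  proof
    fix m assume m: "m \<in> carrier G"
    hence "U +> m \<in> proj_image G U S" using e rcos_in q_carrier by auto
    then obtain s where s: "s \<in> S" "U +> m = U +> s" unfolding proj_image_def by blast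
    have "m \<in> U +> s" using U.a_rcos_self[OF m] s(2) by simp
    then obtain u where "u \<in> U" "m = u \<oplus> s" using rcos_mem submodD(1)[OF S] s(1) by blast
    thus "m \<in> S" using submodD(3)[OF S] US s(1) by blast
  qed
qed

end

context rmod begin

lemma alg1: assumes c: "d \<in> carrier G" "e \<in> carrier G" "d2 \<in> carrier G" "l \<in> carrier G"
  and h: "d \<oplus> e = d2 \<oplus> l" shows "\<ominus> d2 \<oplus> d = l \<oplus> \<ominus> e"
proof -
  have "\<ominus> d2 \<oplus> d = \<ominus> d2 \<oplus> (d \<oplus> e) \<oplus> \<ominus> e" using c by (simp add: a_assoc r_neg)
  also have "\<dots> = \<ominus> d2 \<oplus> (d2 \<oplus> l) \<oplus> \<ominus> e" by (simp only: h)
  also have "\<dots> = l \<oplus> \<ominus> e" using c by (simp add: a_assoc[symmetric] l_neg)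
  finally show ?thesis .
qed


lemma zero_sum_eq: assumes a: "a \<in> carrier G" and b: "b \<in> carrier G" and h: "a \<oplus> \<ominus> b = \<zero>" shows "a = b"
proof -
  have "a = (a \<oplus> \<ominus> b) \<oplus> b" using a b by (simp add: a_assoc l_neg)
  also have "\<dots> = b" using b by (simp only: h l_zero)
  finally show ?thesis .
qed

lemma zero_sum_eq2: "a \<in> carrier G \<Longrightarrow> b \<in> carrier G \<Longrightarrow> \<ominus> a \<oplus> b = \<zero> \<Longrightarrow> a = b"
proof -
  assume a: "a \<in> carrier G" and b: "b \<in> carrier G" and h: "\<ominus> a \<oplus> b = \<zero>"
  have "b \<oplus> \<ominus> a = \<zero>" using h a b by (simp add: a_comm)
  thus "a = b" using zero_sum_eq[OF b a] by simp
qed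

lemma decomp_unique:
  assumes D: "submod R G act D" and D': "submod R G act D'" and I: "D \<inter> D' = {\<zero>}"
  and m: "d \<in> D" "e \<in> D'" "d2 \<in> D" "l \<in> D'" and h: "d \<oplus> e = d2 \<oplus> l"
  shows "e = l" "d = d2"
proof -
  note sD = submodD[OF D] and sD' = submodD[OF D']
  have c: "d \<in> carrier G" "e \<in> carrier G" "d2 \<in> carrier G" "l \<in> carrier G" using m sD(1) sD'(1) by auto
  have w: "\<ominus> d2 \<oplus> d = l \<oplus> \<ominus> e" by (rule alg1[OF c h])
  have "\<ominus> d2 \<oplus> d \<in> D" using sD m by blast
  moreover have "l \<oplus> \<ominus> e \<in> D'" using sD' m by blast
  ultimately have z: "\<ominus> d2 \<oplus> d = \<zero>" using w I by auto
  hence "l \<oplus> \<ominus> e = \<zero>" using w by simp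
  thus "e = l" using zero_sum_eq[OF c(4) c(2)] by simp
  show "d = d2" using zero_sum_eq2[OF c(3) c(1) z] by simp
qed

lemma maxtilde:
  assumes D: "submod R G act D" and D': "submod R G act D'" and I: "D \<inter> D' = {\<zero>}"
  and S: "msum G D D' = carrier G"
  and L: "maximal_sub R G act L" and nL: "\<not> D' \<subseteq> L"
  shows "maximal_sub R G act (msum G D (L \<inter> D'))"
proof -
  note sD = submodD[OF D] and sD' = submodD[OF D']
  have Ls: "submod R G act L" using L unfolding maximal_sub_def by blast
  note sL = submodD[OF Ls]
  have LD': "submod R G act (L \<inter> D')" by (rule submod_Int[OF Ls D'])
  have Ts: "submod R G act (msum G D (L \<inter> D'))" by (rule submod_msum[OF D LD'])
  have dec: "\<And>m. m \<in> carrier G \<Longrightarrow> \<exists>d e. d \<in> D \<and> e \<in> D' \<and> m = d \<oplus> e"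
    using S unfolding msum_def by blast
  have DT: "D \<subseteq> msum G D (L \<inter> D')" unfolding msum_def
  proof
    fix d assume d: "d \<in> D" show "d \<in> {x \<oplus> y |x y. x \<in> D \<and> y \<in> L \<inter> D'}"
    proof -
      have "d = d \<oplus> \<zero>" using d sD(1) by auto
      thus ?thesis using d sL(2) sD'(2) by blast
    qed
  qed
  have memT: "\<And>d e. d \<in> D \<Longrightarrow> e \<in> D' \<Longrightarrow> d \<oplus> e \<in> msum G D (L \<inter> D') \<Longrightarrow> e \<in> L"
  proof -
    fix d e assume de: "d \<in> D" "e \<in> D'" "d \<oplus> e \<in> msum G D (L \<inter> D')"
    then obtain d2 l where "d2 \<in> D" "l \<in> L \<inter> D'" "d \<oplus> e = d2 \<oplus> l" unfolding msum_def by blast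
    thus "e \<in> L" using decomp_unique(1)[OF D D' I de(1,2)] by blast
  qed
  show ?thesis unfolding maximal_sub_def
  proof (intro conjI allI impI)
    show "submod R G act (msum G D (L \<inter> D'))" by (rule Ts)
    show "msum G D (L \<inter> D') \<noteq> carrier G"
    proof
      assume e: "msum G D (L \<inter> D') = carrier G"
      obtain f where f: "f \<in> D'" "f \<notin> L" using nL by blast
      have "\<zero> \<oplus> f \<in> msum G D (L \<inter> D')" using e f sD'(1) by auto
      thus False using memT[OF sD(2) f(1)] f(2) by blast
    qed
  next
    fix K assume K: "submod R G act K \<and> msum G D (L \<inter> D') \<subseteq> K"
    note sK = submodD[OF conjunct1[OF K]]
    show "K = msum G D (L \<inter> D') \<or> K = carrier G"
    proof (cases "K = msum G D (L \<inter> D')")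
      case True thus ?thesis by blast
    next
      case False
      hence ne: "K \<noteq> msum G D (L \<inter> D')" .
      then obtain k where k: "k \<in> K" "k \<notin> msum G D (L \<inter> D')" using K by blast
      obtain d e where de: "d \<in> D" "e \<in> D'" "k = d \<oplus> e" using dec sK(1) k(1) by blast
      have dc: "d \<in> carrier G" "e \<in> carrier G" using de sD(1) sD'(1) by auto
      have "e = \<ominus> d \<oplus> k" using de dc by (simp add: a_assoc[symmetric] l_neg)
      moreover have "\<ominus> d \<in> K" using DT K de(1) sK(4) by blast
      ultimately have eK: "e \<in> K" using sK(3) k(1) by simp
      have eL: "e \<notin> L" using k de unfolding msum_def by blast
      have L2: "submod R G act (msum G L (K \<inter> D'))" by (rule submod_msum[OF Ls submod_Int[OF conjunct1[OF K] D']])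
      have LL2: "L \<subseteq> msum G L (K \<inter> D')" unfolding msum_def
        using sL(1) sK(2) sD'(2) by (force intro: exI[of _ "\<zero>"])
      have "\<zero> \<oplus> e \<in> msum G L (K \<inter> D')" unfolding msum_def using sL(2) eK de(2) by blast
      hence "e \<in> msum G L (K \<inter> D')" using dc by simp
      hence "msum G L (K \<inter> D') \<noteq> L" using eL by blast
      hence full: "msum G L (K \<inter> D') = carrier G" using L L2 LL2 unfolding maximal_sub_def by blast
      have "K = carrier G"
      proof
        show "K \<subseteq> carrier G" using sK(1) .
        show "carrier G \<subseteq> K"
        proof
          fix m assume m: "m \<in> carrier G"
          obtain d1 e1 where de1: "d1 \<in> D" "e1 \<in> D'" "m = d1 \<oplus> e1" using dec m by blast
          have "e1 \<in> carrier G" using de1 sD'(1) by auto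
          then obtain l k' where lk: "l \<in> L" "k' \<in> K \<inter> D'" "e1 = l \<oplus> k'" using full unfolding msum_def by blast
          have lc: "l \<in> carrier G" "k' \<in> carrier G" using lk sL(1) sK(1) by auto
          have "l = e1 \<oplus> \<ominus> k'" using lk lc by (simp add: a_assoc r_neg)
          hence "l \<in> D'" using lk(2) de1(2) sD'(3,4) by auto
          moreover have "l = \<zero> \<oplus> l" using lc by simp
          ultimately have "l \<in> msum G D (L \<inter> D')" using lk(1) sD(2) unfolding msum_def by blast
          hence "l \<in> K" using K by blast
          hence "e1 \<in> K" using lk sK(3) by blast
          moreover have "d1 \<in> K" using de1 DT K by blast
          ultimately show "m \<in> K" using de1 sK(3) by blast
        qed
      qed
      thus ?thesis by blast
    qed
  qed
qed


lemma msum_left: "submod R G act A \<Longrightarrow> submod R G act B \<Longrightarrow> A \<subseteq> msum G A B"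
proof
  fix a assume A: "submod R G act A" and B: "submod R G act B" and a: "a \<in> A"
  have "a = a \<oplus> \<zero>" using a submodD(1)[OF A] by auto
  thus "a \<in> msum G A B" unfolding msum_def using a submodD(2)[OF B] by blast
qed

lemma msum_right: "submod R G act A \<Longrightarrow> submod R G act B \<Longrightarrow> B \<subseteq> msum G A B"
proof
  fix a assume A: "submod R G act A" and B: "submod R G act B" and a: "a \<in> B"
  have "a = \<zero> \<oplus> a" using a submodD(1)[OF B] by auto
  thus "a \<in> msum G A B" unfolding msum_def using a submodD(2)[OF A] by blast
qed

lemma X_in:
  assumes D: "submod R G act D" and D': "submod R G act D'" and I: "D \<inter> D' = {\<zero>}"
  and S: "msum G D D' = carrier G" and Y: "submod R G act Y"
  and sm: "small_sub R (quot_mod G D) (quot_act G act D) (proj_image G D (msum G Y D))"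
  and L: "maximal_sub R G act L" and nL: "\<not> D' \<subseteq> L"
  shows "Y \<subseteq> msum G D (L \<inter> D')"
proof (rule ccontr)
  assume nY: "\<not> Y \<subseteq> msum G D (L \<inter> D')"
  interpret QD: rquot G R act D by unfold_locales (rule D)
  let ?T = "msum G D (L \<inter> D')"
  have Tm: "maximal_sub R G act ?T" by (rule maxtilde[OF D D' I S L nL])
  have Ls: "submod R G act L" using L unfolding maximal_sub_def by blast
  have Ts: "submod R G act ?T" using Tm unfolding maximal_sub_def by blast
  have YD: "submod R G act (msum G Y D)" by (rule submod_msum[OF Y D])
  have Ws: "submod R G act (msum G (msum G Y D) ?T)" by (rule submod_msum[OF YD Ts])
  have TW: "?T \<subseteq> msum G (msum G Y D) ?T" by (rule msum_right[OF YD Ts])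
  have "Y \<subseteq> msum G (msum G Y D) ?T" using msum_left[OF Y D] msum_left[OF YD Ts] by blast
  hence "msum G (msum G Y D) ?T \<noteq> ?T" using nY by blast
  hence W: "msum G (msum G Y D) ?T = carrier G" using Tm Ws TW unfolding maximal_sub_def by blast
  have "msum (quot_mod G D) (proj_image G D (msum G Y D)) (proj_image G D ?T) = carrier (quot_mod G D)"
    using QD.proj_msum[of "msum G Y D" ?T] W QD.proj_carrier submodD(1)[OF YD] submodD(1)[OF Ts] by simp
  hence "proj_image G D ?T = carrier (quot_mod G D)"
    using sm QD.proj_sub[OF Ts] unfolding small_sub_def by blast
  hence "?T = carrier G" using QD.proj_full[OF Ts msum_left[OF D submod_Int[OF Ls D']]] by blast
  thus False using Tm unfolding maximal_sub_def by blast
qed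


lemma msum_mono: "A \<subseteq> A' \<Longrightarrow> B \<subseteq> B' \<Longrightarrow> msum G A B \<subseteq> msum G A' B'"
  unfolding msum_def by blast

lemma comp_N:
  assumes D: "submod R G act D" and D': "submod R G act D'" and I: "D \<inter> D' = {\<zero>}"
  and z: "\<And>L. maximal_sub R G act L \<Longrightarrow> \<not> D' \<subseteq> L \<Longrightarrow> z \<in> msum G D (L \<inter> D')"
  and de: "d \<in> D" "e \<in> D'" "z = d \<oplus> e"
  shows "e \<in> Rad R G act"
  unfolding Rad_def
proof (intro CollectI conjI allI impI)
  show "e \<in> carrier G" using de submodD(1)[OF D'] by auto
  fix L assume L: "maximal_sub R G act L"
  show "e \<in> L"
  proof (cases "D' \<subseteq> L")
    case True thus ?thesis using de by blast
  next
    case False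
    then obtain d2 l where o: "d2 \<in> D" "l \<in> L \<inter> D'" "z = d2 \<oplus> l" using z[OF L] unfolding msum_def by blast
    have "d \<oplus> e = d2 \<oplus> l" using o(3) de(3) by simp
    hence "e = l" using decomp_unique(1)[OF D D' I de(1,2)] o by blast
    thus ?thesis using o(2) by blast
  qed
qed

theorem main: assumes P: "principally_Goldie_star_lifting R G act"
  shows "principally_semisimple R (quot_mod G (Rad R G act)) (quot_act G act (Rad R G act))"
  unfolding principally_semisimple_def
proof
  let ?N = "Rad R G act"
  interpret QN: rquot G R act ?N by unfold_locales (rule Rad_submod)
  fix C assume "C \<in> carrier (quot_mod G ?N)"
  then obtain x where x: "x \<in> carrier G" "C = ?N +> x" using QN.rcosets_elem QN.q_carrier by auto
  let ?Y = "cyclic_sub R act x"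
  have Ys: "submod R G act ?Y" by (rule cyclic_submod[OF x(1)])
  obtain D where Dd: "direct_summand R G act D" and B: "beta_star R G act ?Y D"
    using P x(1) unfolding principally_Goldie_star_lifting_def by blast
  obtain D' where D: "submod R G act D" and D': "submod R G act D'" and S: "msum G D D' = carrier G"
    and I: "D \<inter> D' = {\<zero>}" using Dd unfolding direct_summand_def by blast
  have sm1: "small_sub R (quot_mod G ?Y) (quot_act G act ?Y) (proj_image G ?Y (msum G ?Y D))"
    and sm2: "small_sub R (quot_mod G D) (quot_act G act D) (proj_image G D (msum G ?Y D))"
    using B unfolding beta_star_def by blast+
  have cyc: "cyclic_sub R (quot_act G act ?N) C = proj_image G ?N ?Y"
    unfolding cyclic_sub_def proj_image_def x(2) using QN.qact[OF x(1)] by auto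
  have SA: "msum G ?Y D' = carrier G"
  proof -
    interpret QY: rquot G R act ?Y by unfold_locales (rule Ys)
    have YD: "submod R G act (msum G ?Y D)" by (rule submod_msum[OF Ys D])
    have YD': "submod R G act (msum G ?Y D')" by (rule submod_msum[OF Ys D'])
    have "msum G (msum G ?Y D) (msum G ?Y D') = carrier G"
    proof
      show "msum G (msum G ?Y D) (msum G ?Y D') \<subseteq> carrier G"
        using submodD(1)[OF submod_msum[OF YD YD']] .
      show "carrier G \<subseteq> msum G (msum G ?Y D) (msum G ?Y D')"
        using S msum_mono[OF msum_right[OF Ys D] msum_right[OF Ys D']] by simp
    qed
    hence "msum (quot_mod G ?Y) (proj_image G ?Y (msum G ?Y D)) (proj_image G ?Y (msum G ?Y D')) = carrier (quot_mod G ?Y)"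
      using QY.proj_msum[OF submodD(1)[OF YD] submodD(1)[OF YD']] QY.proj_carrier by simp
    hence "proj_image G ?Y (msum G ?Y D') = carrier (quot_mod G ?Y)"
      using sm1 QY.proj_sub[OF YD'] unfolding small_sub_def by blast
    thus ?thesis using QY.proj_full[OF YD' msum_left[OF Ys D']] by blast
  qed
  have YT: "\<And>L. maximal_sub R G act L \<Longrightarrow> \<not> D' \<subseteq> L \<Longrightarrow> ?Y \<subseteq> msum G D (L \<inter> D')"
    using X_in[OF D D' I S Ys sm2] by blast
  have NT: "\<And>L. maximal_sub R G act L \<Longrightarrow> \<not> D' \<subseteq> L \<Longrightarrow> ?N \<subseteq> msum G D (L \<inter> D')"
    using maxtilde[OF D D' I S] unfolding Rad_def by blast
  have dec: "\<And>m. m \<in> carrier G \<Longrightarrow> \<exists>d e. d \<in> D \<and> e \<in> D' \<and> m = d \<oplus> e"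
    using S unfolding msum_def by blast
  note sD = submodD[OF D] and sD' = submodD[OF D'] and sN = submodD[OF Rad_submod] and sY = submodD[OF Ys]
  have key: "\<And>a b. a \<in> ?Y \<Longrightarrow> b \<in> D' \<Longrightarrow> a \<oplus> \<ominus> b \<in> ?N \<Longrightarrow> b \<in> ?N"
  proof -
    fix a b assume a: "a \<in> ?Y" and b: "b \<in> D'" and n: "a \<oplus> \<ominus> b \<in> ?N"
    have ac: "a \<in> carrier G" "b \<in> carrier G" using a b sY(1) sD'(1) by auto
    obtain d e where de: "d \<in> D" "e \<in> D'" "a \<oplus> \<ominus> b = d \<oplus> e" using dec n sN(1) by blast
    have dc: "d \<in> carrier G" "e \<in> carrier G" using de sD(1) sD'(1) by auto
    have eN: "e \<in> ?N" using comp_N[OF D D' I _ de] n NT by blast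
    have "a = (a \<oplus> \<ominus> b) \<oplus> b" using ac by (simp add: a_assoc l_neg)
    also have "\<dots> = d \<oplus> (e \<oplus> b)" using de(3) dc ac by (simp add: a_assoc)
    finally have "a = d \<oplus> (e \<oplus> b)" .
    hence ebN: "e \<oplus> b \<in> ?N" using comp_N[OF D D' I _ de(1)] a YT sD'(3)[OF de(2) b] by blast
    have "b = \<ominus> e \<oplus> (e \<oplus> b)" using dc ac by (simp add: a_assoc[symmetric] l_neg)
    thus "b \<in> ?N" using sN(3)[OF sN(4)[OF eN] ebN] by simp
  qed
  show "direct_summand R (quot_mod G ?N) (quot_act G act ?N) (cyclic_sub R (quot_act G act ?N) C)"
    unfolding direct_summand_def cyc
  proof (intro conjI exI[of _ "proj_image G ?N D'"])
    show "submod R (quot_mod G ?N) (quot_act G act ?N) (proj_image G ?N ?Y)" by (rule QN.proj_sub[OF Ys])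
    show "submod R (quot_mod G ?N) (quot_act G act ?N) (proj_image G ?N D')" by (rule QN.proj_sub[OF D'])
    show "msum (quot_mod G ?N) (proj_image G ?N ?Y) (proj_image G ?N D') = carrier (quot_mod G ?N)"
      using QN.proj_msum[OF sY(1) sD'(1)] SA QN.proj_carrier by simp
    show "proj_image G ?N ?Y \<inter> proj_image G ?N D' = {\<zero>\<^bsub>quot_mod G ?N\<^esub>}"
    proof
      show "proj_image G ?N ?Y \<inter> proj_image G ?N D' \<subseteq> {\<zero>\<^bsub>quot_mod G ?N\<^esub>}"
      proof
        fix A assume "A \<in> proj_image G ?N ?Y \<inter> proj_image G ?N D'"
        then obtain a b where ab: "a \<in> ?Y" "b \<in> D'" "A = ?N +> a" "A = ?N +> b" unfolding proj_image_def by blast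
        have ac: "a \<in> carrier G" "b \<in> carrier G" using ab sY(1) sD'(1) by auto
        have "a \<oplus> \<ominus> b \<in> ?N" using QN.rcos_eq[OF ac] ab by simp
        hence "b \<in> ?N" using key ab by blast
        hence "A = ?N" using QN.rcos_eq_U[OF ac(2)] ab(4) by simp
        thus "A \<in> {\<zero>\<^bsub>quot_mod G ?N\<^esub>}" using QN.q_zero by simp
      qed
      have "?N +> \<zero> = ?N" using QN.rcos_eq_U sN(2) by simp
      thus "{\<zero>\<^bsub>quot_mod G ?N\<^esub>} \<subseteq> proj_image G ?N ?Y \<inter> proj_image G ?N D'"
        unfolding QN.q_zero proj_image_def using sY(2) sD'(2) by blast
    qed
  qed
qed

end

theorem proposition3p14:
  fixes R :: "('r,'c) ring_scheme" and M :: "('a,'m) ring_scheme" and act :: "'a \<Rightarrow> 'r \<Rightarrow> 'a"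
  assumes "right_module R M act"
    and "principally_Goldie_star_lifting R M act"
    and "small_sub R M act (Rad R M act)"
  shows "principally_semisimple R (quot_mod M (Rad R M act)) (quot_act M act (Rad R M act))"
proof -
  have ag: "abelian_group M" using assms(1) unfolding right_module_def by blast
  interpret rmod M R act by (rule rmod.intro[OF ag rmod_axioms.intro[OF assms(1)]])
  show ?thesis by (rule main[OF assms(2)])
qed

end
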